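(* Let $r\ge2$ be even and let $S=(x_1,x_2,x_3)$ be a sequence in $U(2^r)$ with $x_i\equiv 1\pmod 4$ for $i=1,2,3$ (i.e. its image under $f_{2^r,4}$ is $(1,1,1)$). Then $S$ has no $S(2^r)^*$-weighted zero-sum subsequence.
   Context: For a natural number $m$, $\mathbb Z_m=\mathbb Z/m\mathbb Z$, $U(m)$ its group of units, $S(m)=\{x^2:x\in\mathbb Z_m\}$, $S(m)^*=S(m)\setminus\{0\}$. For $m\mid n$, $f_{n,m}$ is the natural map $\mathbb Z_n\to\mathbb Z_m$. For $A\subseteq\mathbb Z_m$, a sequence $(y_1,\dots,y_k)$ ($k\ge1$) is an $A$-weighted zero-sum sequence if there exist $a_i\in A$ with $\sum a_iy_i=0$; a sequence has an $A$-weighted zero-sum subsequence if some nonempty subsequence is an $A$-weighted zero-sum sequence. *)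

theory Defs
  imports Main "HOL-Library.Sublist"
begin

text \<open>Elements of Z_m are represented by their canonical integer representatives in {0..<m}.\<close>

definition Zm :: "nat \<Rightarrow> int set" where
  "Zm m = {0..<int m}"

definition units_mod :: "nat \<Rightarrow> int set" where
  "units_mod m = {x \<in> Zm m. coprime x (int m)}"

definition squares_mod :: "nat \<Rightarrow> int set" where
  "squares_mod m = {(x^2) mod int m | x. x \<in> Zm m}"

definition squares_mod_star :: "nat \<Rightarrow> int set" where
  "squares_mod_star m = squares_mod m - {0}"

definition weighted_zero_sum :: "nat \<Rightarrow> int set \<Rightarrow> int list \<Rightarrow> bool" where
  "weighted_zero_sum m A ys \<longleftrightarrow> ys \<noteq> [] \<and>
     (\<exists>a :: nat \<Rightarrow> int. (\<forall>i<length ys. a i \<in> A) \<and>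
        (\<Sum>i<length ys. a i * ys ! i) mod int m = 0)"

definition has_weighted_zero_sum_subseq :: "nat \<Rightarrow> int set \<Rightarrow> int list \<Rightarrow> bool" where
  "has_weighted_zero_sum_subseq m A ys \<longleftrightarrow>
     (\<exists>zs. subseq zs ys \<and> weighted_zero_sum m A zs)"

end

theory Submission
  imports Defs
begin

lemma sq_mod4: "((x::int)^2 * y) mod 4 = (if odd x then 1 else 0)" if "y mod 4 = 1"
proof (cases "odd x")
  case True
  then obtain k where "x = 2*k+1" by (metis oddE)
  hence "x^2*y = 4*((k^2+k)*y) + y" by (simp add: power2_eq_square algebra_simps)
  thus ?thesis using True that by simp
next
  case False
  then obtain k where "x = 2*k" by blast
  hence e: "x^2*y = 4*(k^2*y)" by (simp add: power2_eq_square algebra_simps)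
  have "x^2*y mod 4 = 0" unfolding e by simp
  thus ?thesis using False by simp
qed

lemma key:
  fixes x y :: "nat \<Rightarrow> int"
  assumes "even r" "0 < n" "n \<le> 3" "\<forall>i<n. y i mod 4 = 1" "\<forall>i<n. \<not> (2::int)^r dvd (x i)^2"
  shows "\<not> (2::int)^r dvd (\<Sum>i<n. (x i)^2 * y i)"
  using assms
proof (induction r arbitrary: x rule: less_induct)
  case (less r)
  have r0: "r \<noteq> 0"
  proof
    assume "r = 0"
    thus False using less.prems(2,5) by (metis one_dvd power_0)
  qed
  hence r2: "r \<ge> 2" using less.prems(1) by presburger
  show ?case
  proof (cases "\<exists>i<n. odd (x i)")
    case True
    have "(\<Sum>i<n. (x i)^2 * y i) mod 4 = (\<Sum>i<n. (x i)^2 * y i mod 4) mod 4"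
      by (simp add: mod_sum_eq)
    also have "(\<Sum>i<n. (x i)^2 * y i mod 4) = (\<Sum>i<n. if odd (x i) then 1 else 0)"
      using less.prems(4) by (intro sum.cong refl sq_mod4) auto
    also have "\<dots> = int (card {i\<in>{..<n}. odd (x i)})"
      by (simp add: sum.If_cases Int_def conj_commute)
    finally have eq: "(\<Sum>i<n. (x i)^2 * y i) mod 4 = int (card {i\<in>{..<n}. odd (x i)}) mod 4" .
    have "card {i\<in>{..<n}. odd (x i)} \<le> card {..<n}" by (intro card_mono) auto
    hence c3: "card {i\<in>{..<n}. odd (x i)} \<le> 3" using less.prems(3) by simp
    have "card {i\<in>{..<n}. odd (x i)} \<noteq> 0" using True by auto
    hence "int (card {i\<in>{..<n}. odd (x i)}) mod 4 \<noteq> 0" using c3 by auto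
    hence nd: "\<not> 4 dvd (\<Sum>i<n. (x i)^2 * y i)" using eq by auto
    have "(4::int) dvd 2^r"
      using le_imp_power_dvd[OF r2, where a="2::int"] by simp
    thus ?thesis using nd dvd_trans by blast
  next
    case False
    define x' where "x' i = x i div 2" for i
    have xe: "x i = 2 * x' i" if "i < n" for i using False that unfolding x'_def by auto
    have s: "(\<Sum>i<n. (x i)^2 * y i) = 4 * (\<Sum>i<n. (x' i)^2 * y i)"
      by (simp add: sum_distrib_left xe power2_eq_square algebra_simps)
    have pr: "(2::int)^r = 4 * 2^(r-2)"
    proof -
      obtain k where k: "r = k + 2" using r2 by (metis le_add_diff_inverse2)
      show ?thesis unfolding k by (simp add: power_add)
    qed
    have "\<forall>i<n. \<not> (2::int)^(r-2) dvd (x' i)^2"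
    proof (intro allI impI notI)
      fix i assume i: "i < n" and d: "(2::int)^(r-2) dvd (x' i)^2"
      have "(x i)^2 = 4 * (x' i)^2" using xe[OF i] by (simp add: power2_eq_square)
      hence "(2::int)^r dvd (x i)^2" using d pr by simp
      thus False using less.prems(5) i by blast
    qed
    hence "\<not> (2::int)^(r-2) dvd (\<Sum>i<n. (x' i)^2 * y i)"
      using less.IH[of "r-2" x'] r0 less.prems by auto
    thus ?thesis using s pr by simp
  qed
qed

theorem mainTheorem7:
  fixes r :: nat and S :: "int list"
  assumes "r \<ge> 2" and "even r"
    and "length S = 3"
    and "\<forall>x\<in>set S. x \<in> units_mod (2^r)"
    and "\<forall>x\<in>set S. x mod 4 = 1"
  shows "\<not> has_weighted_zero_sum_subseq (2^r) (squares_mod_star (2^r)) S"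
proof
  assume "has_weighted_zero_sum_subseq (2^r) (squares_mod_star (2^r)) S"
  then obtain zs where sub: "subseq zs S" and w: "weighted_zero_sum (2^r) (squares_mod_star (2^r)) zs"
    unfolding has_weighted_zero_sum_subseq_def by (elim exE conjE)
  from w have ne: "zs \<noteq> []" unfolding weighted_zero_sum_def by (elim conjE)
  from w obtain a where aA: "\<forall>i<length zs. a i \<in> squares_mod_star (2^r)"
    and z: "(\<Sum>i<length zs. a i * zs ! i) mod int (2^r) = 0"
    unfolding weighted_zero_sum_def by (elim conjE exE)
  let ?n = "length zs"
  have len: "?n \<le> 3" using list_emb_length[OF sub] assms(3) by simp
  have y: "\<forall>i<?n. zs ! i mod 4 = 1"
  proof (intro allI impI)
    fix i assume "i < ?n"
    hence "zs ! i \<in> set zs" by simp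
    then obtain u where "u \<in> set S" "zs ! i = u" using list_emb_set[OF sub] by blast
    thus "zs ! i mod 4 = 1" using assms(5) by simp
  qed
  have "\<forall>i<?n. \<exists>v. a i = v^2 mod 2^r \<and> a i \<noteq> 0"
  proof (intro allI impI)
    fix i assume "i < ?n"
    hence "a i \<in> squares_mod_star (2^r)" using aA by blast
    thus "\<exists>v. a i = v^2 mod 2^r \<and> a i \<noteq> 0"
      unfolding squares_mod_star_def squares_mod_def by auto
  qed
  then obtain x where x: "\<forall>i<?n. a i = (x i)^2 mod 2^r \<and> a i \<noteq> 0" by (rule choice_iff'[THEN iffD1, elim_format]) blast
  have nd: "\<forall>i<?n. \<not> (2::int)^r dvd (x i)^2"
    using x by (auto simp add: dvd_eq_mod_eq_0)
  have "(\<Sum>i<?n. a i * zs ! i) mod 2^r = (\<Sum>i<?n. a i * zs ! i mod 2^r) mod 2^r"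
    by (simp add: mod_sum_eq)
  also have "(\<Sum>i<?n. a i * zs ! i mod 2^r) = (\<Sum>i<?n. (x i)^2 * zs ! i mod 2^r)"
  proof (rule sum.cong[OF refl])
    fix i assume "i \<in> {..<?n}"
    hence "a i = (x i)^2 mod 2^r" using x by blast
    thus "a i * zs ! i mod 2^r = (x i)^2 * zs ! i mod 2^r" by (simp add: mod_mult_left_eq)
  qed
  also have "(\<Sum>i<?n. (x i)^2 * zs ! i mod 2^r) mod 2^r = (\<Sum>i<?n. (x i)^2 * zs ! i) mod 2^r"
    by (simp add: mod_sum_eq)
  finally have "(2::int)^r dvd (\<Sum>i<?n. (x i)^2 * zs ! i)" using z by (simp add: dvd_eq_mod_eq_0)
  moreover have "\<not> (2::int)^r dvd (\<Sum>i<?n. (x i)^2 * zs ! i)"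
    using key[of r ?n "\<lambda>i. zs ! i" x] assms(2) ne len y nd by simp
  ultimately show False by blast
qed

end
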